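(* Under the standing setup, fix an integer $K>1$. For integers $B>1$ with $\mu_B:=E(\min(Z_1,B))>1$ and $n>K$, define the pruned set $D_n^{(B)}$ as follows: for each $u\in D_{n-K}$ put $\mathcal V_0(u)=\{u\}$ and, for $i=1,\dots,K$, let $\mathcal V_i(u)$ be the set of vertices $(w,j)$ with $w\in\mathcal V_{i-1}(u)$ and $1\le j\le B$ (i.e. the first at most $B$ children, in Ulam–Harris order, of vertices of $\mathcal V_{i-1}(u)$); let $D_n^{(B)}:=\bigcup_{u\in D_{n-K}}\mathcal V_K(u)$. Define $\tilde N_n^{(K,B)}:=\sum_{v\in D_n^{(B)}}\sum_{e\in I_v^K}\delta_{b_n^{-1}X_e}$ and $\tilde N_n^{(K)}:=\sum_{|v|=n}\sum_{e\in I_v^K}\delta_{b_n^{-1}X_e}$. Then for every $\epsilon>0$, $$\lim_{B\to\infty}\limsup_{n\to\infty}P^*\big(\rho(\tilde N_n^{(K)},\tilde N_n^{(K,B)})>\epsilon\big)=0.$$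
   Context: Standing setup. Let $\{Z_i\}_{i\ge0}$ be a Galton–Watson process with $Z_0\equiv1$ and offspring variable $Z_1$ with mean $\mu:=E(Z_1)\in(1,\infty)$, satisfying $E(Z_1\log^+Z_1)<\infty$, with genealogical tree rooted at $o$, vertices labelled in Ulam–Harris fashion (the children of vertex $w$ are $(w,1),(w,2),\dots$). For a vertex $v$, $|v|$ is its generation and $I_v$ the set of edges of the path from $o$ to $v$; each edge is identified with its endpoint farther from the root and belongs to generation $m$ if that endpoint has generation $m$; $D_m$ is the set of generation-$m$ vertices. For $|v|=n>K$, $I_v^K$ is the set of edges of $I_v$ in generations $n-K+1,\dots,n$. Independently of the tree, attach i.i.d. real random variables $X_e$ to the edges with $P(|X_e|>x)=x^{-\alpha}L(x)$ ($\alpha>0$, $L$ slowly varying) and $P(X_e>x)/P(|X_e|>x)\to p$, $P(X_e<-x)/P(|X_e|>x)\to q$, $p,q\ge0$, $p+q=1$. Let $b_n>0$ satisfy $\mu^nP(b_n^{-1}X_e\in\cdot)\to\nu_\alpha$ vaguely on $\mathbb E:=[-\infty,\infty]\setminus\{0\}$, with $\nu_\alpha(dx)=\alpha px^{-\alpha-1}\mathbf 1_{(0,\infty)}(x)dx+\alpha q(-x)^{-\alpha-1}\mathbf 1_{(-\infty,0)}(x)dx$. $P^*$ denotes conditioning on survival. $\rho$ is a metric on the space $\mathscr M$ of Radon point measures on $\mathbb E$ of the form $\rho(m_1,m_2)=\sum_{i\ge1}2^{-i}\min(|m_1(h_i)-m_2(h_i)|,1)$, where $\{h_i\}$ is a fixed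 sequence of nonnegative Lipschitz continuous compactly supported functions on $\mathbb E$ chosen so that $\rho$ metrizes the vague topology. *)

theory Defs
  imports "HOL-Probability.Probability"
begin

text \<open>Vertices are lists of positive naturals; the root o is the empty list, and the
children of w are w @ [1], w @ [2], ...  The offspring count of vertex w is xi w omega.
An edge is identified with its endpoint farther from the root (a nonempty list);
the generation of a vertex is its length.\<close>

definition gw_tree :: "(nat list \<Rightarrow> 'a \<Rightarrow> nat) \<Rightarrow> 'a \<Rightarrow> nat list set" where
  "gw_tree xi \<omega> = {v. \<forall>k<length v. 1 \<le> v ! k \<and> v ! k \<le> xi (take k v) \<omega>}"

definition gen :: "(nat list \<Rightarrow> 'a \<Rightarrow> nat) \<Rightarrow> 'a \<Rightarrow> nat \<Rightarrow> nat list set" where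
  "gen xi \<omega> m = {v \<in> gw_tree xi \<omega>. length v = m}"

definition survives :: "(nat list \<Rightarrow> 'a \<Rightarrow> nat) \<Rightarrow> 'a \<Rightarrow> bool" where
  "survives xi \<omega> \<longleftrightarrow> (\<forall>m. gen xi \<omega> m \<noteq> {})"

definition Pstar :: "'a measure \<Rightarrow> (nat list \<Rightarrow> 'a \<Rightarrow> nat) \<Rightarrow> 'a set \<Rightarrow> real" where
  "Pstar M xi A = measure M (A \<inter> {\<omega> \<in> space M. survives xi \<omega>})
                  / measure M {\<omega> \<in> space M. survives xi \<omega>}"

fun prunedV :: "(nat list \<Rightarrow> 'a \<Rightarrow> nat) \<Rightarrow> nat \<Rightarrow> 'a \<Rightarrow> nat list \<Rightarrow> nat \<Rightarrow> nat list set" where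
  "prunedV xi B \<omega> u 0 = {u}"
| "prunedV xi B \<omega> u (Suc i) =
     {w @ [j] | w j. w \<in> prunedV xi B \<omega> u i \<and> 1 \<le> j \<and> j \<le> B \<and> j \<le> xi w \<omega>}"

definition pruned_gen :: "(nat list \<Rightarrow> 'a \<Rightarrow> nat) \<Rightarrow> nat \<Rightarrow> nat \<Rightarrow> 'a \<Rightarrow> nat \<Rightarrow> nat list set" where
  "pruned_gen xi B K \<omega> n = (\<Union>u \<in> gen xi \<omega> (n - K). prunedV xi B \<omega> u K)"

text \<open>A point measure on E is represented by its multiplicity function c (c x = mass at x);
it is Radon iff every compact subset of E, i.e. every closed set contained in some
{x. delta <= |x|}, carries finitely many atoms.\<close>
definition radon_pm :: "(ereal \<Rightarrow> nat) \<Rightarrow> bool" where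
  "radon_pm c \<longleftrightarrow> c 0 = 0 \<and> (\<forall>\<delta>>0. finite {x. c x \<noteq> 0 \<and> ereal \<delta> \<le> \<bar>x\<bar>})"

text \<open>The point measure sum_{i in I} delta_{g i} on E (atoms at 0 are not in E and are dropped).\<close>
definition pt_measure :: "'i set \<Rightarrow> ('i \<Rightarrow> real) \<Rightarrow> ereal \<Rightarrow> nat" where
  "pt_measure I g x = (if x = 0 then 0 else card {i \<in> I. ereal (g i) = x})"

definition pm_int :: "(ereal \<Rightarrow> nat) \<Rightarrow> (ereal \<Rightarrow> real) \<Rightarrow> real" where
  "pm_int c f = (\<Sum>x \<in> {x. c x \<noteq> 0 \<and> f x \<noteq> 0}. real (c x) * f x)"

text \<open>Continuous functions with compact support in E (support avoids a neighbourhood of 0).\<close>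
definition CK :: "(ereal \<Rightarrow> real) \<Rightarrow> bool" where
  "CK f \<longleftrightarrow> continuous_on UNIV f \<and> (\<exists>\<delta>>0. \<forall>x. \<bar>x\<bar> < ereal \<delta> \<longrightarrow> f x = 0)"

definition CK_plus :: "(ereal \<Rightarrow> real) \<Rightarrow> bool" where
  "CK_plus f \<longleftrightarrow> CK f \<and> (\<forall>x. 0 \<le> f x)"

definition lipschitz_E :: "(ereal \<Rightarrow> real) \<Rightarrow> bool" where
  "lipschitz_E f \<longleftrightarrow> (\<exists>L. \<forall>x y::real. \<bar>f (ereal x) - f (ereal y)\<bar> \<le> L * \<bar>x - y\<bar>)"

text \<open>rho(m1,m2) = sum_{i>=1} 2^{-i} min(|m1(h_i) - m2(h_i)|, 1), indexed from 0 here.\<close>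
definition rho :: "(nat \<Rightarrow> ereal \<Rightarrow> real) \<Rightarrow> (ereal \<Rightarrow> nat) \<Rightarrow> (ereal \<Rightarrow> nat) \<Rightarrow> real" where
  "rho h m1 m2 = (\<Sum>i. (1/2) ^ Suc i * min \<bar>pm_int m1 (h i) - pm_int m2 (h i)\<bar> 1)"

definition metrizes_vague :: "(nat \<Rightarrow> ereal \<Rightarrow> real) \<Rightarrow> bool" where
  "metrizes_vague h \<longleftrightarrow>
     (\<forall>ms m. radon_pm m \<and> (\<forall>k. radon_pm (ms k)) \<longrightarrow>
        ((\<lambda>k. rho h (ms k) m) \<longlonglongrightarrow> 0) \<longleftrightarrow>
        (\<forall>f. CK_plus f \<longrightarrow> (\<lambda>k. pm_int (ms k) f) \<longlonglongrightarrow> pm_int m f))"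

definition slowly_varying :: "(real \<Rightarrow> real) \<Rightarrow> bool" where
  "slowly_varying L \<longleftrightarrow> (\<forall>\<^sub>F x in at_top. L x > 0) \<and>
     (\<forall>c>0. ((\<lambda>x. L (c * x) / L x) \<longlongrightarrow> 1) at_top)"

text \<open>nu_alpha(f) for f on E; nu_alpha puts no mass on +-oo.\<close>
definition nu_int :: "real \<Rightarrow> real \<Rightarrow> real \<Rightarrow> (ereal \<Rightarrow> real) \<Rightarrow> real" where
  "nu_int \<alpha> p q f =
     (LINT x:{0<..}|lborel. f (ereal x) * (\<alpha> * p * x powr (- \<alpha> - 1)))
   + (LINT x:{..<0}|lborel. f (ereal x) * (\<alpha> * q * (- x) powr (- \<alpha> - 1)))"

text \<open>tilde N_n^{(K)}: sum over |v| = n and edges e of I_v^K (e = take k v, n-K < k <= n).\<close>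
definition NK :: "(nat list \<Rightarrow> 'a \<Rightarrow> nat) \<Rightarrow> (nat list \<Rightarrow> 'a \<Rightarrow> real) \<Rightarrow> (nat \<Rightarrow> real)
                  \<Rightarrow> nat \<Rightarrow> nat \<Rightarrow> 'a \<Rightarrow> ereal \<Rightarrow> nat" where
  "NK xi X b K n \<omega> = pt_measure {(v, k). v \<in> gen xi \<omega> n \<and> n - K < k \<and> k \<le> n}
                        (\<lambda>(v, k). X (take k v) \<omega> / b n)"

definition NKB :: "(nat list \<Rightarrow> 'a \<Rightarrow> nat) \<Rightarrow> (nat list \<Rightarrow> 'a \<Rightarrow> real) \<Rightarrow> (nat \<Rightarrow> real)
                  \<Rightarrow> nat \<Rightarrow> nat \<Rightarrow> nat \<Rightarrow> 'a \<Rightarrow> ereal \<Rightarrow> nat" where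
  "NKB xi X b K B n \<omega> = pt_measure {(v, k). v \<in> pruned_gen xi B K \<omega> n \<and> n - K < k \<and> k \<le> n}
                        (\<lambda>(v, k). X (take k v) \<omega> / b n)"

end

theory Submission
  imports Defs
begin


lemma gw_tree_iff: "v \<in> gw_tree xi \<omega> \<longleftrightarrow> (\<forall>k<length v. 1 \<le> v!k \<and> v!k \<le> xi (take k v) \<omega>)"
  by (simp add: gw_tree_def)

lemma snoc_split: "length v = Suc n \<Longrightarrow> v = butlast v @ [v ! n]"
  by (metis append_butlast_last_id diff_Suc_1 last_conv_nth length_0_conv length_butlast nat.distinct(1))

lemma gen_Suc: "gen xi \<omega> (Suc n) = (\<Union>w\<in>gen xi \<omega> n. (\<lambda>j. w @ [j]) ` {1..xi w \<omega>})"
proof (intro set_eqI iffI)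
  fix v assume v: "v \<in> gen xi \<omega> (Suc n)"
  then have len: "length v = Suc n" by (simp add: gen_def)
  let ?w = "butlast v"
  have eq: "v = ?w @ [v!n]" using snoc_split[OF len] .
  have lw: "length ?w = n" using len by simp
  have "?w \<in> gen xi \<omega> n"
    using v len unfolding gen_def gw_tree_iff
    by (auto simp: nth_butlast take_butlast)
  moreover have "v!n \<in> {1..xi ?w \<omega>}"
    using v len unfolding gen_def gw_tree_iff
  proof -
    have "1 \<le> v!n \<and> v!n \<le> xi (take n v) \<omega>" using v len unfolding gen_def gw_tree_iff by auto
    moreover have "take n v = ?w" using len by (simp add: butlast_conv_take)
    ultimately show ?thesis by simp
  qed
  ultimately show "v \<in> (\<Union>w\<in>gen xi \<omega> n. (\<lambda>j. w @ [j]) ` {1..xi w \<omega>})"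
    using eq by blast
next
  fix v assume "v \<in> (\<Union>w\<in>gen xi \<omega> n. (\<lambda>j. w @ [j]) ` {1..xi w \<omega>})"
  then obtain w j where w: "w \<in> gen xi \<omega> n" and j: "1 \<le> j" "j \<le> xi w \<omega>" and v: "v = w @ [j]" by auto
  show "v \<in> gen xi \<omega> (Suc n)"
    using w j unfolding v gen_def gw_tree_iff
    by (auto simp: nth_append less_Suc_eq)
qed

lemma finite_gen: "finite (gen xi \<omega> n)"
proof (induction n)
  case 0
  have "gen xi \<omega> 0 \<subseteq> {[]}" by (auto simp: gen_def)
  then show ?case using finite_subset by blast
next
  case (Suc n) then show ?case by (simp add: gen_Suc)
qed

lemma prunedV_char:
  assumes "length u = m"
  shows "prunedV xi B \<omega> u i = {v. length v = m + i \<and> take m v = u \<and>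
            (\<forall>k. m \<le> k \<and> k < m + i \<longrightarrow> 1 \<le> v!k \<and> v!k \<le> B \<and> v!k \<le> xi (take k v) \<omega>)}"
proof (induction i)
  case 0
  then show ?case using assms by auto
next
  case (Suc i)
  show ?case
  proof (intro set_eqI iffI)
    fix v assume "v \<in> prunedV xi B \<omega> u (Suc i)"
    then obtain w j where w: "w \<in> prunedV xi B \<omega> u i" and j: "1 \<le> j" "j \<le> B" "j \<le> xi w \<omega>"
      and v: "v = w @ [j]" by auto
    from w Suc.IH have lw: "length w = m + i" and tw: "take m w = u"
      and wk: "\<forall>k. m \<le> k \<and> k < m + i \<longrightarrow> 1 \<le> w!k \<and> w!k \<le> B \<and> w!k \<le> xi (take k w) \<omega>" by auto
    show "v \<in> {v. length v = m + Suc i \<and> take m v = u \<and>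
            (\<forall>k. m \<le> k \<and> k < m + Suc i \<longrightarrow> 1 \<le> v!k \<and> v!k \<le> B \<and> v!k \<le> xi (take k v) \<omega>)}"
      using lw tw wk j unfolding v
      by (auto simp: nth_append less_Suc_eq)
  next
    fix v assume v: "v \<in> {v. length v = m + Suc i \<and> take m v = u \<and>
            (\<forall>k. m \<le> k \<and> k < m + Suc i \<longrightarrow> 1 \<le> v!k \<and> v!k \<le> B \<and> v!k \<le> xi (take k v) \<omega>)}"
    then have len: "length v = Suc (m + i)" by simp
    let ?w = "butlast v"
    have eq: "v = ?w @ [v!(m+i)]" using snoc_split[OF len] .
    have "?w \<in> prunedV xi B \<omega> u i"
      using v unfolding Suc.IH
      by (auto simp: nth_butlast take_butlast)
    moreover have "1 \<le> v!(m+i) \<and> v!(m+i) \<le> B \<and> v!(m+i) \<le> xi ?w \<omega>"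
      using v len by (auto simp: butlast_conv_take)
    ultimately show "v \<in> prunedV xi B \<omega> u (Suc i)"
      using eq by (simp only: prunedV.simps) blast
  qed
qed

lemma pruned_gen_char:
  assumes "K \<le> n"
  shows "pruned_gen xi B K \<omega> n = {v \<in> gen xi \<omega> n. \<forall>k. n - K \<le> k \<and> k < n \<longrightarrow> v!k \<le> B}"
proof (intro set_eqI iffI)
  fix v assume "v \<in> pruned_gen xi B K \<omega> n"
  then obtain u where u: "u \<in> gen xi \<omega> (n - K)" and v: "v \<in> prunedV xi B \<omega> u K"
    by (auto simp: pruned_gen_def)
  have lu: "length u = n - K" using u by (simp add: gen_def)
  have vv: "length v = n - K + K \<and> take (n-K) v = u \<and> (\<forall>k. n - K \<le> k \<and> k < n - K + K \<longrightarrow> 1 \<le> v!k \<and> v!k \<le> B \<and> v!k \<le> xi (take k v) \<omega>)"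
    using v unfolding prunedV_char[OF lu, of xi B \<omega> K] by blast
  have nk: "n - K + K = n" using assms by simp
  from vv nk have lv: "length v = n" and tv: "take (n-K) v = u"
    and vk: "\<forall>k. n - K \<le> k \<and> k < n \<longrightarrow> 1 \<le> v!k \<and> v!k \<le> B \<and> v!k \<le> xi (take k v) \<omega>"
    by auto
  have "v \<in> gw_tree xi \<omega>"
    unfolding gw_tree_iff
  proof (intro allI impI)
    fix k assume k: "k < length v"
    show "1 \<le> v!k \<and> v!k \<le> xi (take k v) \<omega>"
    proof (cases "k < n - K")
      case True
      have "u \<in> gw_tree xi \<omega>" using u by (simp add: gen_def)
      then have "1 \<le> u!k \<and> u!k \<le> xi (take k u) \<omega>" using True lu by (simp add: gw_tree_iff)
      moreover have "u!k = v!k" "take k u = take k v" using True tv by auto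
      ultimately show ?thesis by simp
    next
      case False then show ?thesis using vk k lv by auto
    qed
  qed
  then show "v \<in> {v \<in> gen xi \<omega> n. \<forall>k. n - K \<le> k \<and> k < n \<longrightarrow> v!k \<le> B}"
    using lv vk by (simp add: gen_def)
next
  fix v assume v: "v \<in> {v \<in> gen xi \<omega> n. \<forall>k. n - K \<le> k \<and> k < n \<longrightarrow> v!k \<le> B}"
  then have lv: "length v = n" and vt: "v \<in> gw_tree xi \<omega>" by (auto simp: gen_def)
  let ?u = "take (n-K) v"
  have "?u \<in> gen xi \<omega> (n - K)"
    using vt lv unfolding gen_def gw_tree_iff by (auto simp: min_def)
  moreover have "v \<in> prunedV xi B \<omega> ?u K"
  proof -
    have lu: "length ?u = n - K" using lv by simp
    show ?thesis unfolding prunedV_char[OF lu] using lv v vt assms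
      by (auto simp: gw_tree_iff min_def)
  qed
  ultimately show "v \<in> pruned_gen xi B K \<omega> n"
    by (auto simp: pruned_gen_def)
qed




lemma pm_int_pt:
  assumes fin: "finite I" and f0: "f 0 = 0"
  shows "pm_int (pt_measure I g) f = (\<Sum>i\<in>I. f (ereal (g i)))"
proof -
  let ?c = "pt_measure I g"
  let ?T = "(\<lambda>i. ereal (g i)) ` I"
  have finT: "finite ?T" using fin by simp
  have sub: "{x. ?c x \<noteq> 0 \<and> f x \<noteq> 0} \<subseteq> ?T"
  proof
    fix x assume "x \<in> {x. ?c x \<noteq> 0 \<and> f x \<noteq> 0}"
    then have "card {i \<in> I. ereal (g i) = x} \<noteq> 0" by (auto simp: pt_measure_def split: if_splits)
    then obtain i where "i \<in> I" "ereal (g i) = x" by (metis (mono_tags, lifting) Collect_empty_eq card.empty)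
    then show "x \<in> ?T" by blast
  qed
  have "pm_int ?c f = (\<Sum>x\<in>?T. real (?c x) * f x)"
    unfolding pm_int_def by (rule sum.mono_neutral_left[OF finT sub]) auto
  also have "\<dots> = (\<Sum>x\<in>?T. \<Sum>i\<in>{i\<in>I. ereal (g i) = x}. f (ereal (g i)))"
  proof (rule sum.cong[OF refl])
    fix x assume "x \<in> ?T"
    show "real (?c x) * f x = (\<Sum>i\<in>{i\<in>I. ereal (g i) = x}. f (ereal (g i)))"
    proof (cases "x = 0")
      case True
      then show ?thesis using f0 by (simp add: pt_measure_def zero_ereal_def)
    next
      case False
      have "(\<Sum>i\<in>{i\<in>I. ereal (g i) = x}. f (ereal (g i))) = (\<Sum>i\<in>{i\<in>I. ereal (g i) = x}. f x)"
        by (rule sum.cong) auto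
      then show ?thesis using False by (simp add: pt_measure_def)
    qed
  qed
  also have "\<dots> = (\<Sum>i\<in>I. f (ereal (g i)))"
    by (rule sum.image_gen[symmetric, OF fin])
  finally show ?thesis .
qed

lemma rho_bound:
  assumes eq: "\<And>i. i < N \<Longrightarrow> pm_int m1 (h i) = pm_int m2 (h i)"
  shows "rho h m1 m2 \<le> (1/2) ^ N"
proof -
  define t where "t i = (1/2::real) ^ Suc i * min \<bar>pm_int m1 (h i) - pm_int m2 (h i)\<bar> 1" for i
  have t0: "0 \<le> t i" for i by (simp add: t_def)
  have tle: "t i \<le> (1/2) ^ Suc i" for i
    unfolding t_def by (rule mult_left_le) auto
  have sg: "summable (\<lambda>i. (1/2::real) ^ Suc i)"
    using summable_geometric[of "1/2::real"] by (simp add: summable_mult)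
  have st: "summable t"
    by (rule summable_comparison_test'[OF sg]) (use t0 tle in auto)
  have tz: "i < N \<Longrightarrow> t i = 0" for i using eq by (simp add: t_def)
  have "rho h m1 m2 = suminf t" unfolding rho_def t_def ..
  also have "\<dots> = (\<Sum>i<N. t i) + (\<Sum>i. t (i + N))"
    using suminf_split_initial_segment[OF st, of N] by simp
  also have "(\<Sum>i<N. t i) = 0" using tz by simp
  also have "(\<Sum>i. t (i + N)) \<le> (\<Sum>i. (1/2::real) ^ Suc (i + N))"
    apply (rule suminf_le)
    using tle apply blast
     apply (rule summable_ignore_initial_segment[OF st])
    using summable_ignore_initial_segment[OF sg, of N] by simp
  also have "(\<Sum>i. (1/2::real) ^ Suc (i + N)) = (1/2)^Suc N * (\<Sum>i. (1/2::real) ^ i)"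
    by (subst suminf_mult[symmetric]) (auto simp: power_add mult_ac summable_geometric)
  also have "\<dots> = (1/2)^N"
    by (subst suminf_geometric) auto
  finally show ?thesis by simp
qed




definition aj :: "'a measure \<Rightarrow> (nat list \<Rightarrow> 'a \<Rightarrow> nat) \<Rightarrow> nat \<Rightarrow> real" where
  "aj M xi j = (if 1 \<le> j then measure M {\<omega> \<in> space M. j \<le> xi [] \<omega>} else 0)"

lemma tree_event_prob:
  fixes M :: "'a measure" and xi :: "nat list \<Rightarrow> 'a \<Rightarrow> nat" and X :: "nat list \<Rightarrow> 'a \<Rightarrow> real"
  assumes P: "prob_space M"
    and xi_meas: "\<And>v. xi v \<in> measurable M (count_space UNIV)"
    and X_meas: "\<And>v. X v \<in> borel_measurable M"
    and indep: "prob_space.indep_vars M (\<lambda>_. borel)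
                  (\<lambda>i \<omega>. case i of Inl v \<Rightarrow> real (xi v \<omega>) | Inr v \<Rightarrow> X v \<omega>) UNIV"
    and xi_id: "\<And>v. distr M (count_space UNIV) (xi v) = distr M (count_space UNIV) (xi [])"
    and X_id: "\<And>v. distr M borel (X v) = distr M borel (X [])"
    and lv: "length v = n"
  shows "measure M {\<omega> \<in> space M. v \<in> gw_tree xi \<omega> \<and> t \<le> \<bar>X e \<omega>\<bar>}
       = (\<Prod>k<n. aj M xi (v!k)) * measure M {\<omega> \<in> space M. t \<le> \<bar>X [] \<omega>\<bar>}"
proof -
  interpret prob_space M by (rule P)
  show ?thesis
  proof (cases "\<exists>k<n. v!k = 0")
    case True
    then obtain k where k: "k < n" "v!k = 0" by auto
    have e1: "{\<omega> \<in> space M. v \<in> gw_tree xi \<omega> \<and> t \<le> \<bar>X e \<omega>\<bar>} = {}"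
      using k lv by (auto simp: gw_tree_iff)
    have e2: "(\<Prod>k<n. aj M xi (v!k)) = 0"
      using k by (intro prod_zero) (auto simp: aj_def intro!: bexI[of _ k])
    show ?thesis by (simp only: e1 e2) simp
  next
    case False
    then have pos: "\<And>k. k < n \<Longrightarrow> 1 \<le> v!k" by (simp add: Suc_le_eq)
    define F where "F = (\<lambda>i \<omega>. case i of Inl v \<Rightarrow> real (xi v \<omega>) | Inr v \<Rightarrow> X v \<omega>)"
    define S where "S = (\<lambda>i::nat list + nat list. case i of Inl w \<Rightarrow> {real (v!length w)..} | Inr _ \<Rightarrow> {x::real. t \<le> \<bar>x\<bar>})"
    define A where "A = (\<lambda>i. F i -` S i \<inter> space M)"
    define J where "J = insert (Inr e) ((\<lambda>k. Inl (take k v)) ` {..<n})"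
    have ind: "indep_sets (\<lambda>i. {F i -` A \<inter> space M | A. A \<in> sets borel}) UNIV"
      using indep unfolding indep_vars_def2 F_def by simp
    have Sb: "S i \<in> sets borel" for i
    proof (cases i)
      case (Inr x)
      have "closed {x::real. t \<le> \<bar>x\<bar>}" by (intro closed_Collect_le continuous_intros)
      then show ?thesis using Inr by (simp add: S_def borel_closed)
    qed (simp add: S_def)
    have inj: "inj_on (\<lambda>k. Inl (take k v) :: nat list + nat list) {..<n}"
      by (rule inj_onI) (use lv in \<open>auto dest: arg_cong[of _ _ length]\<close>)
    have prodJ: "prob (\<Inter>j\<in>J. A j) = (\<Prod>j\<in>J. prob (A j))"
      by (rule indep_setsD[OF ind]) (auto simp: J_def A_def intro!: Sb)
    have I1: "(\<Inter>j\<in>J. A j) = A (Inr e) \<inter> (\<Inter>k\<in>{..<n}. A (Inl (take k v)))"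
      by (simp add: J_def)
    have I2: "A (Inr e) = {\<omega> \<in> space M. t \<le> \<bar>X e \<omega>\<bar>}"
      unfolding A_def F_def S_def by (simp add: vimage_def Int_def conj_commute)
    have I3: "A (Inl (take k v)) = {\<omega> \<in> space M. v!k \<le> xi (take k v) \<omega>}" if "k < n" for k
      using that lv unfolding A_def F_def S_def by (simp add: vimage_def Int_def conj_commute min_def)
    have C: "(\<Inter>j\<in>J. A j) = {\<omega> \<in> space M. v \<in> gw_tree xi \<omega> \<and> t \<le> \<bar>X e \<omega>\<bar>}"
      unfolding I1 I2 gw_tree_iff lv using I3 pos by blast
    have PJ: "(\<Prod>j\<in>J. prob (A j)) = prob (A (Inr e)) * (\<Prod>k<n. prob (A (Inl (take k v))))"
      unfolding J_def by (subst prod.insert) (auto simp: prod.reindex[OF inj])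
    have PE: "prob (A (Inr e)) = measure M {\<omega> \<in> space M. t \<le> \<bar>X [] \<omega>\<bar>}"
    proof -
      have "prob (A (Inr e)) = measure (distr M borel (X e)) {x. t \<le> \<bar>x\<bar>}"
        using Sb[of "Inr e"] by (simp add: measure_distr X_meas A_def F_def S_def vimage_def Int_def conj_commute)
      also have "\<dots> = measure (distr M borel (X [])) {x. t \<le> \<bar>x\<bar>}" by (simp only: X_id[of e])
      also have "\<dots> = measure M {\<omega> \<in> space M. t \<le> \<bar>X [] \<omega>\<bar>}"
        using Sb[of "Inr e"] by (simp add: measure_distr X_meas S_def vimage_def Int_def conj_commute)
      finally show ?thesis .
    qed
    have PK: "prob (A (Inl (take k v))) = aj M xi (v!k)" if k: "k < n" for k
    proof -
      have "prob (A (Inl (take k v))) = measure M {\<omega> \<in> space M. v!k \<le> xi (take k v) \<omega>}"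
        using k lv by (simp add: A_def F_def S_def vimage_def Int_def conj_commute min_def)
      also have "\<dots> = measure (distr M (count_space UNIV) (xi (take k v))) {v!k..}"
        by (simp add: measure_distr xi_meas vimage_def Int_def conj_commute)
      also have "\<dots> = measure (distr M (count_space UNIV) (xi [])) {v!k..}" by (simp only: xi_id[of "take k v"])
      also have "\<dots> = measure M {\<omega> \<in> space M. v!k \<le> xi [] \<omega>}"
        by (simp add: measure_distr xi_meas vimage_def Int_def conj_commute)
      finally show ?thesis using pos[OF k] by (simp add: aj_def)
    qed
    have "(\<Prod>k<n. prob (A (Inl (take k v)))) = (\<Prod>k<n. aj M xi (v!k))"
      by (rule prod.cong[OF refl]) (simp add: PK)
    then show ?thesis using prodJ unfolding C PJ PE by (simp add: mult.commute)
  qed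
qed




lemma list_prod_sum:
  fixes g :: "nat \<Rightarrow> nat \<Rightarrow> ennreal"
  shows "(\<integral>\<^sup>+v. (\<Prod>k<n. g k (v!k)) \<partial>count_space {v. length v = n})
       = (\<Prod>k<n. \<integral>\<^sup>+j. g k j \<partial>count_space UNIV)"
proof (induction n arbitrary: g)
  case 0
  have "{v::nat list. length v = 0} = {[]}" by auto
  then show ?case by (simp add: nn_integral_count_space_finite)
next
  case (Suc n)
  let ?L = "{v::nat list. length v = n}"
  have bij: "bij_betw (\<lambda>(j,xs). j # xs) (UNIV \<times> ?L) {v. length v = Suc n}"
    by (rule bij_betwI[where g="\<lambda>v. (hd v, tl v)"]) (auto simp: length_Suc_conv)
  have "(\<integral>\<^sup>+v. (\<Prod>k<Suc n. g k (v!k)) \<partial>count_space {v. length v = Suc n})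
      = (\<integral>\<^sup>+p. (\<Prod>k<Suc n. g k (((\<lambda>(j,xs). j # xs) p)!k)) \<partial>count_space (UNIV \<times> ?L))"
    by (rule nn_integral_bij_count_space[symmetric, OF bij])
  also have "\<dots> = (\<integral>\<^sup>+p. (\<Prod>k<Suc n. g k (((\<lambda>(j,xs). j # xs) p)!k)) \<partial>(count_space UNIV \<Otimes>\<^sub>M count_space ?L))"
    by (subst pair_measure_countable) auto
  also have "\<dots> = (\<integral>\<^sup>+j. \<integral>\<^sup>+xs. (\<Prod>k<Suc n. g k ((j # xs)!k)) \<partial>count_space ?L \<partial>count_space UNIV)"
    by (subst sigma_finite_measure.nn_integral_fst[symmetric])
       (auto intro!: sigma_finite_measure_count_space_countable simp: pair_measure_countable)
  also have "\<dots> = (\<integral>\<^sup>+j. g 0 j * \<integral>\<^sup>+xs. (\<Prod>k<n. g (Suc k) (xs!k)) \<partial>count_space ?L \<partial>count_space UNIV)"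
    by (subst prod.lessThan_Suc_shift) (simp add: nn_integral_cmult)
  also have "\<dots> = (\<integral>\<^sup>+j. g 0 j \<partial>count_space UNIV) * (\<Prod>k<n. \<integral>\<^sup>+j. g (Suc k) j \<partial>count_space UNIV)"
    using Suc.IH[of "\<lambda>k. g (Suc k)"] by (simp add: nn_integral_multc)
  also have "\<dots> = (\<Prod>k<Suc n. \<integral>\<^sup>+j. g k j \<partial>count_space UNIV)"
    by (subst prod.lessThan_Suc_shift) simp
  finally show ?case .
qed

lemma emeasure_UN_le_countable:
  assumes I: "countable I" and C: "\<And>i. i \<in> I \<Longrightarrow> C i \<in> sets M"
  shows "emeasure M (\<Union>i\<in>I. C i) \<le> (\<integral>\<^sup>+i. emeasure M (C i) \<partial>count_space I)"
proof -
  have U: "(\<Union>i\<in>I. C i) \<in> sets M" using I C by (intro sets.countable_UN'') auto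
  have "emeasure M (\<Union>i\<in>I. C i) = (\<integral>\<^sup>+\<omega>. indicator (\<Union>i\<in>I. C i) \<omega> \<partial>M)"
    using U by simp
  also have "\<dots> \<le> (\<integral>\<^sup>+\<omega>. (\<integral>\<^sup>+i. indicator (C i) \<omega> \<partial>count_space I) \<partial>M)"
  proof (rule nn_integral_mono)
    fix \<omega>
    show "indicator (\<Union>i\<in>I. C i) \<omega> \<le> (\<integral>\<^sup>+i. indicator (C i) \<omega> \<partial>count_space I)"
    proof (cases "\<omega> \<in> (\<Union>i\<in>I. C i)")
      case True
      then obtain i0 where i0: "i0 \<in> I" "\<omega> \<in> C i0" by auto
      have "(\<integral>\<^sup>+i. indicator {i0} i \<partial>count_space I) \<le> (\<integral>\<^sup>+i. indicator (C i) \<omega> \<partial>count_space I)"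
        by (rule nn_integral_mono) (use i0 in \<open>auto split: split_indicator\<close>)
      moreover have "(\<integral>\<^sup>+i. indicator {i0} i \<partial>count_space I) = 1"
        using i0 by (subst nn_integral_indicator) auto
      ultimately show ?thesis using True by simp
    qed simp
  qed
  also have "\<dots> = (\<integral>\<^sup>+i. (\<integral>\<^sup>+\<omega>. indicator (C i) \<omega> \<partial>M) \<partial>count_space I)"
    by (rule nn_integral_count_space_nn_integral[OF I]) (use C in auto)
  also have "\<dots> = (\<integral>\<^sup>+i. emeasure M (C i) \<partial>count_space I)"
    by (rule nn_integral_cong) (use C in simp)
  finally show ?thesis .
qed

lemma sum_aj:
  fixes M :: "'a measure" and xi :: "nat list \<Rightarrow> 'a \<Rightarrow> nat"
  assumes P: "prob_space M"
    and xi_meas: "\<And>v. xi v \<in> measurable M (count_space UNIV)"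
    and Z_int: "integrable M (\<lambda>\<omega>. real (xi [] \<omega>))"
  shows "(\<integral>\<^sup>+j. ennreal (aj M xi j) \<partial>count_space UNIV) = ennreal (\<integral>\<omega>. real (xi [] \<omega>) \<partial>M)"
proof -
  interpret prob_space M by (rule P)
  define f where "f j \<omega> = (if 1 \<le> j \<and> j \<le> xi [] \<omega> then 1 else (0::ennreal))" for j \<omega>
  have fm: "f j \<in> borel_measurable M" for j
    unfolding f_def by (rule measurable_compose[OF xi_meas[of "[]"]]) simp
  have pw: "ennreal (real (xi [] \<omega>)) = (\<integral>\<^sup>+j. f j \<omega> \<partial>count_space UNIV)" for \<omega>
  proof -
    have "(\<integral>\<^sup>+j. f j \<omega> \<partial>count_space UNIV) = (\<Sum>j\<in>{1..xi [] \<omega>}. f j \<omega>)"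
      by (rule nn_integral_count_space') (auto simp: f_def)
    also have "\<dots> = (\<Sum>j\<in>{1..xi [] \<omega>}. 1)" by (rule sum.cong) (auto simp: f_def)
    finally show ?thesis by (simp add: ennreal_of_nat_eq_real_of_nat)
  qed
  have "ennreal (\<integral>\<omega>. real (xi [] \<omega>) \<partial>M) = (\<integral>\<^sup>+\<omega>. ennreal (real (xi [] \<omega>)) \<partial>M)"
    by (rule nn_integral_eq_integral[symmetric, OF Z_int]) simp
  also have "\<dots> = (\<integral>\<^sup>+\<omega>. (\<integral>\<^sup>+j. f j \<omega> \<partial>count_space UNIV) \<partial>M)"
    by (simp add: pw)
  also have "\<dots> = (\<integral>\<^sup>+j. (\<integral>\<^sup>+\<omega>. f j \<omega> \<partial>M) \<partial>count_space UNIV)"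
    by (rule nn_integral_count_space_nn_integral) (auto simp: fm)
  also have "\<dots> = (\<integral>\<^sup>+j. ennreal (aj M xi j) \<partial>count_space UNIV)"
  proof (rule nn_integral_cong)
    fix j :: nat
    show "(\<integral>\<^sup>+\<omega>. f j \<omega> \<partial>M) = ennreal (aj M xi j)"
    proof (cases "1 \<le> j")
      case True
      have S: "{\<omega> \<in> space M. j \<le> xi [] \<omega>} \<in> sets M"
        using measurable_sets[OF xi_meas[of "[]"], of "{j..}"] by (simp add: vimage_def Int_def conj_commute)
      have "(\<integral>\<^sup>+\<omega>. f j \<omega> \<partial>M) = (\<integral>\<^sup>+\<omega>. indicator {\<omega> \<in> space M. j \<le> xi [] \<omega>} \<omega> \<partial>M)"
        by (rule nn_integral_cong) (use True in \<open>auto simp: f_def\<close>)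
      also have "\<dots> = emeasure M {\<omega> \<in> space M. j \<le> xi [] \<omega>}" using S by simp
      finally show ?thesis using True by (simp add: aj_def emeasure_eq_measure)
    next
      case False then show ?thesis by (simp add: f_def aj_def)
    qed
  qed
  finally show ?thesis ..
qed

lemma tail_aj:
  fixes a :: "nat \<Rightarrow> real"
  assumes fin: "(\<integral>\<^sup>+j. ennreal (a j) \<partial>count_space UNIV) \<noteq> \<infinity>"
  shows "(\<lambda>B. \<integral>\<^sup>+j. ennreal (a j) * indicator {B<..} j \<partial>count_space UNIV) \<longlonglongrightarrow> 0"
proof -
  define N where "N = density (count_space UNIV) (\<lambda>j. ennreal (a j))"
  have em: "emeasure N A = (\<integral>\<^sup>+j. ennreal (a j) * indicator A j \<partial>count_space UNIV)" for A
    unfolding N_def by (rule emeasure_density) auto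
  have "(\<lambda>B. emeasure N {B<..}) \<longlonglongrightarrow> emeasure N (\<Inter>B. {B<..})"
  proof (rule Lim_emeasure_decseq)
    show "range (\<lambda>B. {B<..}) \<subseteq> sets N" by (simp add: N_def)
    show "decseq (\<lambda>B::nat. {B<..})" by (auto simp: decseq_def)
    fix B :: nat
    have "emeasure N {B<..} \<le> emeasure N UNIV"
      by (rule emeasure_mono) (auto simp: N_def)
    also have "\<dots> = (\<integral>\<^sup>+j. ennreal (a j) \<partial>count_space UNIV)" by (simp add: em)
    finally show "emeasure N {B<..} \<noteq> \<infinity>" using fin by (auto simp: top_unique)
  qed
  moreover have "(\<Inter>B. {B<..}) = ({} :: nat set)" by auto
  ultimately show ?thesis by (simp add: em)
qed




lemma Cs_sets:
  fixes M :: "'a measure" and xi :: "nat list \<Rightarrow> 'a \<Rightarrow> nat" and X :: "nat list \<Rightarrow> 'a \<Rightarrow> real" and t :: real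
  assumes xi_meas: "\<And>v. xi v \<in> measurable M (count_space UNIV)"
    and X_meas: "\<And>v. X v \<in> borel_measurable M"
  shows "{\<omega> \<in> space M. Q \<and> v \<in> gw_tree xi \<omega> \<and> t \<le> \<bar>X e \<omega>\<bar>} \<in> sets M"
proof -
  have A: "{\<omega> \<in> space M. 1 \<le> v!k \<and> v!k \<le> xi (take k v) \<omega>} \<in> sets M" for k
  proof (cases "1 \<le> v!k")
    case True
    have "{\<omega> \<in> space M. 1 \<le> v!k \<and> v!k \<le> xi (take k v) \<omega>} = xi (take k v) -` {v!k..} \<inter> space M"
      using True by auto
    then show ?thesis using measurable_sets[OF xi_meas, of "{v!k..}"] by simp
  qed simp
  have Xs: "{\<omega> \<in> space M. t \<le> \<bar>X e \<omega>\<bar>} \<in> sets M"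
  proof -
    have "closed {x::real. t \<le> \<bar>x\<bar>}" by (intro closed_Collect_le continuous_intros)
    then have "{x::real. t \<le> \<bar>x\<bar>} \<in> sets borel" by (simp add: borel_closed)
    from measurable_sets[OF X_meas this] show ?thesis by (simp add: vimage_def Int_def conj_commute)
  qed
  have T: "{\<omega> \<in> space M. v \<in> gw_tree xi \<omega>} = space M \<inter> (\<Inter>k\<in>{..<length v}. {\<omega> \<in> space M. 1 \<le> v!k \<and> v!k \<le> xi (take k v) \<omega>})"
    unfolding gw_tree_iff by auto
  have Tm: "{\<omega> \<in> space M. v \<in> gw_tree xi \<omega>} \<in> sets M"
  proof (cases "length v = 0")
    case True
    then have "{\<omega> \<in> space M. v \<in> gw_tree xi \<omega>} = space M" by (auto simp: gw_tree_iff)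
    then show ?thesis by simp
  next
    case False
    show ?thesis unfolding T using False by (intro sets.Int sets.top sets.finite_INT A) auto
  qed
  have "{\<omega> \<in> space M. Q \<and> v \<in> gw_tree xi \<omega> \<and> t \<le> \<bar>X e \<omega>\<bar>} = (if Q then {\<omega> \<in> space M. v \<in> gw_tree xi \<omega>} \<inter> {\<omega> \<in> space M. t \<le> \<bar>X e \<omega>\<bar>} else {})"
    by auto
  then show ?thesis using Tm Xs by simp
qed

lemma union_bound:
  fixes M :: "'a measure" and xi :: "nat list \<Rightarrow> 'a \<Rightarrow> nat" and X :: "nat list \<Rightarrow> 'a \<Rightarrow> real"
  assumes P: "prob_space M"
    and xi_meas: "\<And>v. xi v \<in> measurable M (count_space UNIV)"
    and X_meas: "\<And>v. X v \<in> borel_measurable M"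
    and indep: "prob_space.indep_vars M (\<lambda>_. borel)
                  (\<lambda>i \<omega>. case i of Inl v \<Rightarrow> real (xi v \<omega>) | Inr v \<Rightarrow> X v \<omega>) UNIV"
    and xi_id: "\<And>v. distr M (count_space UNIV) (xi v) = distr M (count_space UNIV) (xi [])"
    and X_id: "\<And>v. distr M borel (X v) = distr M borel (X [])"
    and sumaj: "(\<integral>\<^sup>+j. ennreal (aj M xi j) \<partial>count_space UNIV) = ennreal \<mu>"
    and Kn: "K \<le> n"
  shows "emeasure M (\<Union>m\<in>{n-K..<n}. \<Union>k\<in>{n-K<..n}. \<Union>v\<in>{v. length v = n}.
            {\<omega> \<in> space M. B < v!m \<and> v \<in> gw_tree xi \<omega> \<and> t \<le> \<bar>X (take k v) \<omega>\<bar>})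
       \<le> of_nat K * of_nat K * ((ennreal \<mu>) ^ (n - 1) *
            (\<integral>\<^sup>+j. ennreal (aj M xi j) * indicator {B<..} j \<partial>count_space UNIV) *
            ennreal (measure M {\<omega> \<in> space M. t \<le> \<bar>X [] \<omega>\<bar>}))"
proof -
  interpret prob_space M by (rule P)
  let ?pX = "measure M {\<omega> \<in> space M. t \<le> \<bar>X [] \<omega>\<bar>}"
  let ?T = "(\<integral>\<^sup>+j. ennreal (aj M xi j) * indicator {B<..} j \<partial>count_space UNIV)"
  define Cs where "Cs m k v = {\<omega> \<in> space M. B < v!m \<and> v \<in> gw_tree xi \<omega> \<and> t \<le> \<bar>X (take k v) \<omega>\<bar>}" for m k :: nat and v :: "nat list"
  define G where "G m k' j = (if k' = m then ennreal (aj M xi j) * indicator {B<..} j else ennreal (aj M xi j))" for m k' :: nat and j :: nat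
  have CsM: "Cs m k v \<in> sets M" for m k v unfolding Cs_def by (rule Cs_sets[OF xi_meas X_meas])
  have aj0: "0 \<le> aj M xi j" for j by (simp add: aj_def)
  have one: "emeasure M (\<Union>v\<in>{v. length v = n}. Cs m k v) \<le> (ennreal \<mu>) ^ (n - 1) * ?T * ennreal ?pX"
    if m: "m < n" for m k
  proof -
    have "emeasure M (\<Union>v\<in>{v. length v = n}. Cs m k v) \<le> (\<integral>\<^sup>+v. emeasure M (Cs m k v) \<partial>count_space {v. length v = n})"
      by (rule emeasure_UN_le_countable) (auto simp: CsM)
    also have "\<dots> = (\<integral>\<^sup>+v. (\<Prod>k'<n. G m k' (v!k')) * ennreal ?pX \<partial>count_space {v. length v = n})"
    proof (rule nn_integral_cong)
      fix v assume "v \<in> space (count_space {v::nat list. length v = n})"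
      then have lv: "length v = n" by simp
      show "emeasure M (Cs m k v) = (\<Prod>k'<n. G m k' (v!k')) * ennreal ?pX"
      proof (cases "B < v!m")
        case True
        have "emeasure M (Cs m k v) = ennreal (measure M {\<omega> \<in> space M. v \<in> gw_tree xi \<omega> \<and> t \<le> \<bar>X (take k v) \<omega>\<bar>})"
          using True by (simp add: Cs_def emeasure_eq_measure)
        also have "\<dots> = ennreal ((\<Prod>k'<n. aj M xi (v!k')) * ?pX)"
          by (subst tree_event_prob[OF P xi_meas X_meas indep xi_id X_id lv]) rule
        also have "\<dots> = (\<Prod>k'<n. ennreal (aj M xi (v!k'))) * ennreal ?pX"
          by (simp add: ennreal_mult prod_nonneg aj0 prod_ennreal)
        also have "(\<Prod>k'<n. ennreal (aj M xi (v!k'))) = (\<Prod>k'<n. G m k' (v!k'))"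
          by (rule prod.cong) (use True in \<open>auto simp: G_def\<close>)
        finally show ?thesis .
      next
        case False
        then have "Cs m k v = {}" by (simp add: Cs_def)
        moreover have "(\<Prod>k'<n. G m k' (v!k')) = 0"
          using False m by (intro prod_zero) (auto simp: G_def intro!: bexI[of _ m])
        ultimately show ?thesis by simp
      qed
    qed
    also have "\<dots> = (\<integral>\<^sup>+v. (\<Prod>k'<n. G m k' (v!k')) \<partial>count_space {v. length v = n}) * ennreal ?pX"
      by (rule nn_integral_multc) simp
    also have "\<dots> = (\<Prod>k'<n. \<integral>\<^sup>+j. G m k' j \<partial>count_space UNIV) * ennreal ?pX"
      by (simp only: list_prod_sum)
    also have "(\<Prod>k'<n. \<integral>\<^sup>+j. G m k' j \<partial>count_space UNIV) = (\<integral>\<^sup>+j. G m m j \<partial>count_space UNIV) * (\<Prod>k'\<in>{..<n} - {m}. \<integral>\<^sup>+j. G m k' j \<partial>count_space UNIV)"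
      by (rule prod.remove) (use m in auto)
    also have "(\<Prod>k'\<in>{..<n} - {m}. \<integral>\<^sup>+j. G m k' j \<partial>count_space UNIV) = (\<Prod>k'\<in>{..<n} - {m}. ennreal \<mu>)"
      by (rule prod.cong) (auto simp: G_def sumaj)
    also have "\<dots> = (ennreal \<mu>) ^ (n - 1)" using m by simp
    also have "(\<integral>\<^sup>+j. G m m j \<partial>count_space UNIV) = ?T" by (simp add: G_def)
    finally show ?thesis by (simp add: mult_ac)
  qed
  have "emeasure M (\<Union>m\<in>{n-K..<n}. \<Union>k\<in>{n-K<..n}. \<Union>v\<in>{v. length v = n}. Cs m k v)
      \<le> (\<Sum>m\<in>{n-K..<n}. emeasure M (\<Union>k\<in>{n-K<..n}. \<Union>v\<in>{v. length v = n}. Cs m k v))"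
    by (rule emeasure_subadditive_finite) (auto intro!: sets.countable_UN'' CsM)
  also have "\<dots> \<le> (\<Sum>m\<in>{n-K..<n}. \<Sum>k\<in>{n-K<..n}. emeasure M (\<Union>v\<in>{v. length v = n}. Cs m k v))"
    by (intro sum_mono emeasure_subadditive_finite) (auto intro!: sets.countable_UN'' CsM)
  also have "\<dots> \<le> (\<Sum>m\<in>{n-K..<n}. \<Sum>k\<in>{n-K<..n}. (ennreal \<mu>) ^ (n - 1) * ?T * ennreal ?pX)"
    by (intro sum_mono one) auto
  also have "\<dots> = of_nat K * of_nat K * ((ennreal \<mu>) ^ (n - 1) * ?T * ennreal ?pX)"
    using Kn by (simp add: mult_ac)
  finally show ?thesis unfolding Cs_def .
qed




lemma event_incl:
  fixes xi :: "nat list \<Rightarrow> 'a \<Rightarrow> nat" and X :: "nat list \<Rightarrow> 'a \<Rightarrow> real"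
    and h :: "nat \<Rightarrow> ereal \<Rightarrow> real"
  assumes Kn: "K \<le> n"
    and hz: "\<And>i x. i < N \<Longrightarrow> \<bar>x\<bar> < ereal (d i) \<Longrightarrow> h i x = 0"
    and dpos: "\<And>i. i < N \<Longrightarrow> 0 < d i"
    and dle: "\<And>i. i < N \<Longrightarrow> \<delta> \<le> d i"
    and notU: "\<And>v m k. length v = n \<Longrightarrow> n - K \<le> m \<Longrightarrow> m < n \<Longrightarrow> n - K < k \<Longrightarrow> k \<le> n
                 \<Longrightarrow> B < v!m \<Longrightarrow> v \<in> gw_tree xi \<omega> \<Longrightarrow> \<bar>X (take k v) \<omega>\<bar> < \<delta> * b n"
    and bpos: "0 < b n"
  shows "rho h (NK xi X b K n \<omega>) (NKB xi X b K B n \<omega>) \<le> (1/2) ^ N"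
proof (rule rho_bound)
  fix i assume i: "i < N"
  define I1 where "I1 = {(v, k). v \<in> gen xi \<omega> n \<and> n - K < k \<and> k \<le> n}"
  define I2 where "I2 = {(v, k). v \<in> pruned_gen xi B K \<omega> n \<and> n - K < k \<and> k \<le> n}"
  define g where "g = (\<lambda>(v, k). X (take k v) \<omega> / b n)"
  have fin1: "finite I1"
    by (rule finite_subset[of _ "gen xi \<omega> n \<times> {..n}"]) (auto simp: I1_def finite_gen)
  have sub: "I2 \<subseteq> I1" using Kn by (auto simp: I1_def I2_def pruned_gen_char)
  have fin2: "finite I2" using finite_subset[OF sub fin1] .
  have h0: "h i 0 = 0" using hz[OF i, of 0] dpos[OF i] by simp
  have "pm_int (NK xi X b K n \<omega>) (h i) = (\<Sum>p\<in>I1. h i (ereal (g p)))"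
    unfolding NK_def I1_def[symmetric] g_def[symmetric] by (rule pm_int_pt[where f="h i", OF fin1 h0])
  also have "\<dots> = (\<Sum>p\<in>I2. h i (ereal (g p)))"
  proof (rule sum.mono_neutral_right[OF fin1 sub])
    show "\<forall>p\<in>I1 - I2. h i (ereal (g p)) = 0"
    proof
      fix p assume p: "p \<in> I1 - I2"
      then obtain v k where pv: "p = (v, k)" and v: "v \<in> gen xi \<omega> n" and k: "n - K < k" "k \<le> n"
        and nv: "v \<notin> pruned_gen xi B K \<omega> n"
        by (auto simp: I1_def I2_def)
      from nv v obtain m where m: "n - K \<le> m" "m < n" "B < v!m"
        using Kn by (auto simp: pruned_gen_char not_le)
      have lv: "length v = n" and vt: "v \<in> gw_tree xi \<omega>" using v by (auto simp: gen_def)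
      have "\<bar>X (take k v) \<omega>\<bar> < \<delta> * b n" by (rule notU[OF lv m(1,2) k m(3) vt])
      then have "\<bar>X (take k v) \<omega>\<bar> / b n < \<delta>" using bpos by (simp add: pos_divide_less_eq)
      moreover have "\<bar>X (take k v) \<omega> / b n\<bar> = \<bar>X (take k v) \<omega>\<bar> / b n" using bpos by (simp add: abs_divide)
      moreover have "g p = X (take k v) \<omega> / b n" by (simp add: g_def pv)
      ultimately have "\<bar>g p\<bar> < d i" using dle[OF i] by linarith
      then have "\<bar>ereal (g p)\<bar> < ereal (d i)" by simp
      then show "h i (ereal (g p)) = 0" by (rule hz[OF i])
    qed
  qed
  also have "\<dots> = pm_int (NKB xi X b K B n \<omega>) (h i)"
    unfolding NKB_def I2_def[symmetric] g_def[symmetric] by (rule pm_int_pt[where f="h i", OF fin2 h0, symmetric])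
  finally show "pm_int (NK xi X b K n \<omega>) (h i) = pm_int (NKB xi X b K B n \<omega>) (h i)" .
qed




lemma exists_bump:
  assumes d: "0 < (\<delta>::real)"
  shows "\<exists>f. CK f \<and> (\<forall>x. 0 \<le> f x \<and> f x \<le> 1) \<and> (\<forall>x::real. \<delta> \<le> \<bar>x\<bar> \<longrightarrow> f (ereal x) = 1)"
proof -
  define cl where "cl x = max (ereal (-\<delta>)) (min (ereal \<delta>) x)" for x
  define \<phi> where "\<phi> y = min 1 (max 0 ((2 / \<delta>) * \<bar>y\<bar> - 1))" for y :: real
  define f where "f x = \<phi> (real_of_ereal (cl x))" for x
  have ccl: "continuous_on UNIV cl" unfolding cl_def by (intro continuous_intros)
  have clfin: "cl x \<in> UNIV - {\<infinity>, -\<infinity>}" for x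
  proof -
    have "ereal (-\<delta>) \<le> cl x" "cl x \<le> ereal \<delta>" using d unfolding cl_def by auto
    then show ?thesis by auto
  qed
  have c1: "continuous_on UNIV (\<lambda>x. real_of_ereal (cl x))"
    by (rule continuous_on_compose2[OF continuous_on_real ccl]) (use clfin in auto)
  have cphi: "continuous_on UNIV \<phi>" unfolding \<phi>_def by (intro continuous_intros)
  have cf: "continuous_on UNIV f"
    unfolding f_def by (rule continuous_on_compose2[OF cphi c1]) auto
  have van: "\<forall>x. \<bar>x\<bar> < ereal (\<delta>/2) \<longrightarrow> f x = 0"
  proof (intro allI impI)
    fix x :: ereal assume x: "\<bar>x\<bar> < ereal (\<delta>/2)"
    then obtain r where r: "x = ereal r" "\<bar>r\<bar> < \<delta>/2" by (cases x) auto
    then have "cl x = ereal r" using d by (auto simp: cl_def)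
    moreover have "2 * \<bar>r\<bar> / \<delta> - 1 < 0" using r d by (simp add: field_simps)
    ultimately show "f x = 0" by (simp add: f_def \<phi>_def)
  qed
  have one: "\<delta> \<le> \<bar>x\<bar> \<Longrightarrow> f (ereal x) = 1" for x :: real
  proof -
    assume x: "\<delta> \<le> \<bar>x\<bar>"
    have "cl (ereal x) = ereal \<delta> \<or> cl (ereal x) = ereal (-\<delta>)"
      using x d by (auto simp: cl_def min_def max_def)
    then have "\<bar>real_of_ereal (cl (ereal x))\<bar> = \<delta>" using d by force
    then show ?thesis using d by (simp add: f_def \<phi>_def)
  qed
  have "CK f" unfolding CK_def using cf van d by (intro conjI exI[of _ "\<delta>/2"]) auto
  moreover have "\<forall>x. 0 \<le> f x \<and> f x \<le> 1" by (simp add: f_def \<phi>_def)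
  ultimately show ?thesis using one by blast
qed

lemma pX_bound:
  fixes M :: "'a measure" and X :: "'a \<Rightarrow> real" and b :: "nat \<Rightarrow> real"
  assumes P: "prob_space M" and Xm: "X \<in> borel_measurable M" and b_pos: "\<And>n. 0 < b n"
    and mu: "0 < \<mu>"
    and vague: "\<And>f. CK f \<Longrightarrow> convergent (\<lambda>n. \<mu> ^ n * (\<integral>\<omega>. f (ereal (X \<omega> / b n)) \<partial>M))"
    and d: "0 < \<delta>"
  shows "\<exists>C. \<forall>n. \<mu> ^ n * measure M {\<omega> \<in> space M. \<delta> * b n \<le> \<bar>X \<omega>\<bar>} \<le> C"
proof -
  interpret prob_space M by (rule P)
  obtain f where f: "CK f" "\<And>x. 0 \<le> f x \<and> f x \<le> 1" "\<And>x::real. \<delta> \<le> \<bar>x\<bar> \<Longrightarrow> f (ereal x) = 1"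
    using exists_bump[OF d] by blast
  have "Bseq (\<lambda>n. \<mu> ^ n * (\<integral>\<omega>. f (ereal (X \<omega> / b n)) \<partial>M))"
    by (rule convergent_imp_Bseq[OF vague[OF f(1)]])
  then obtain C where C0: "\<forall>n. norm (\<mu> ^ n * (\<integral>\<omega>. f (ereal (X \<omega> / b n)) \<partial>M)) \<le> C"
    unfolding Bseq_def by blast
  then have C: "\<And>n. norm (\<mu> ^ n * (\<integral>\<omega>. f (ereal (X \<omega> / b n)) \<partial>M)) \<le> C" by blast
  have fb: "f \<in> borel_measurable borel"
    using f(1) by (intro borel_measurable_continuous_onI) (simp add: CK_def)
  show ?thesis
  proof (intro exI allI)
    fix n
    let ?A = "{\<omega> \<in> space M. \<delta> * b n \<le> \<bar>X \<omega>\<bar>}"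
    have Am: "?A \<in> sets M" using Xm by measurable
    have gm: "(\<lambda>\<omega>. f (ereal (X \<omega> / b n))) \<in> borel_measurable M"
      using fb Xm by measurable
    have gi: "integrable M (\<lambda>\<omega>. f (ereal (X \<omega> / b n)))"
      by (rule integrable_const_bound[where B=1]) (use f(2) gm in auto)
    have "measure M ?A = (\<integral>\<omega>. indicator ?A \<omega> \<partial>M)" using Am by simp
    also have "\<dots> \<le> (\<integral>\<omega>. f (ereal (X \<omega> / b n)) \<partial>M)"
    proof (rule integral_mono[OF _ gi])
      show "integrable M (indicator ?A :: 'a \<Rightarrow> real)" using Am by (intro integrable_real_indicator) (simp_all add: emeasure_eq_measure)
      fix \<omega> assume "\<omega> \<in> space M"
      show "indicator ?A \<omega> \<le> f (ereal (X \<omega> / b n))"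
      proof (cases "\<omega> \<in> ?A")
        case True
        then have "\<delta> * b n \<le> \<bar>X \<omega>\<bar>" by simp
        then have "\<delta> \<le> \<bar>X \<omega>\<bar> / b n" using b_pos[of n] by (simp add: pos_le_divide_eq)
        moreover have "\<bar>X \<omega> / b n\<bar> = \<bar>X \<omega>\<bar> / b n" using b_pos[of n] by (simp add: abs_divide)
        ultimately have "\<delta> \<le> \<bar>X \<omega> / b n\<bar>" by linarith
        then show ?thesis using True f(3) by simp
      qed (use f(2) in simp)
    qed
    finally have "\<mu> ^ n * measure M ?A \<le> \<mu> ^ n * (\<integral>\<omega>. f (ereal (X \<omega> / b n)) \<partial>M)"
      using mu by (simp add: mult_left_mono)
    also have "\<dots> \<le> C" using C[of n] by simp
    finally show "\<mu> ^ n * measure M ?A \<le> C" .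
  qed
qed




theorem lemma3p3:
  fixes M :: "'a measure"
    and xi :: "nat list \<Rightarrow> 'a \<Rightarrow> nat"
    and X :: "nat list \<Rightarrow> 'a \<Rightarrow> real"
    and \<mu> \<alpha> p q :: real
    and b :: "nat \<Rightarrow> real"
    and h :: "nat \<Rightarrow> ereal \<Rightarrow> real"
    and K :: nat
  assumes P: "prob_space M"
    and xi_meas: "\<And>v. xi v \<in> measurable M (count_space UNIV)"
    and X_meas: "\<And>v. X v \<in> borel_measurable M"
    and indep: "prob_space.indep_vars M (\<lambda>_. borel)
                  (\<lambda>i \<omega>. case i of Inl v \<Rightarrow> real (xi v \<omega>) | Inr v \<Rightarrow> X v \<omega>) UNIV"
    and xi_id: "\<And>v. distr M (count_space UNIV) (xi v) = distr M (count_space UNIV) (xi [])"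
    and X_id: "\<And>v. distr M borel (X v) = distr M borel (X [])"
    and Z_int: "integrable M (\<lambda>\<omega>. real (xi [] \<omega>))"
    and mu_def: "\<mu> = (\<integral>\<omega>. real (xi [] \<omega>) \<partial>M)"
    and mu_gt: "1 < \<mu>"
    and LlogL: "integrable M (\<lambda>\<omega>. real (xi [] \<omega>) * max 0 (ln (real (xi [] \<omega>))))"
    and alpha_pos: "0 < \<alpha>"
    and tail: "\<exists>L. slowly_varying L \<and>
                 (\<forall>x>0. measure M {\<omega> \<in> space M. \<bar>X [] \<omega>\<bar> > x} = x powr (- \<alpha>) * L x)"
    and pq: "0 \<le> p" "0 \<le> q" "p + q = 1"
    and tail_p: "((\<lambda>x. measure M {\<omega> \<in> space M. X [] \<omega> > x}
                    / measure M {\<omega> \<in> space M. \<bar>X [] \<omega>\<bar> > x}) \<longlongrightarrow> p) at_top"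
    and tail_q: "((\<lambda>x. measure M {\<omega> \<in> space M. X [] \<omega> < - x}
                    / measure M {\<omega> \<in> space M. \<bar>X [] \<omega>\<bar> > x}) \<longlongrightarrow> q) at_top"
    and b_pos: "\<And>n. 0 < b n"
    and vague: "\<And>f. CK f \<Longrightarrow>
                  (\<lambda>n. \<mu> ^ n * (\<integral>\<omega>. f (ereal (X [] \<omega> / b n)) \<partial>M)) \<longlonglongrightarrow> nu_int \<alpha> p q f"
    and h_nonneg: "\<And>i x. 0 \<le> h i x"
    and h_lip: "\<And>i. lipschitz_E (h i)"
    and h_CK: "\<And>i. CK (h i)"
    and h_metr: "metrizes_vague h"
    and K_gt: "1 < K"
  shows "\<forall>\<epsilon>>0. ((\<lambda>B. limsup (\<lambda>n. ereal (Pstar M xi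
            {\<omega> \<in> space M. rho h (NK xi X b K n \<omega>) (NKB xi X b K B n \<omega>) > \<epsilon>})))
          \<longlongrightarrow> 0) at_top"
proof (intro allI impI)
  fix \<epsilon> :: real assume \<epsilon>: "0 < \<epsilon>"
  interpret prob_space M by (rule P)
  define S where "S = {\<omega> \<in> space M. survives xi \<omega>}"
  define ps where "ps = measure M S"
  define Ev where "Ev B n = {\<omega> \<in> space M. rho h (NK xi X b K n \<omega>) (NKB xi X b K B n \<omega>) > \<epsilon>}" for B n
  have Pst: "Pstar M xi (Ev B n) = measure M (Ev B n \<inter> S) / ps" for B n
    by (simp add: Pstar_def S_def ps_def)
  have ps0: "0 \<le> ps" by (simp add: ps_def)
  have main: "((\<lambda>B. limsup (\<lambda>n. ereal (Pstar M xi (Ev B n)))) \<longlongrightarrow> 0) at_top"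
  proof (cases "ps = 0")
    case True
    then have "\<And>B n. Pstar M xi (Ev B n) = 0" by (simp add: Pst)
    then show ?thesis by (simp add: Limsup_const flip: zero_ereal_def)
  next
    case False
    with ps0 have psp: "0 < ps" by simp
    have mupos: "0 < \<mu>" using mu_gt by simp
    obtain N where N: "(1/2::real) ^ N < \<epsilon>"
    proof -
      have "\<forall>\<^sub>F n in sequentially. \<bar>(1/2::real)^n\<bar> < \<epsilon>"
        by (rule Archimedean_eventually_pow_inverse) (use \<epsilon> in auto)
      then obtain N where "\<bar>(1/2::real)^N\<bar> < \<epsilon>" by (auto simp: eventually_sequentially)
      then show ?thesis using that by simp
    qed
    have "\<forall>i. \<exists>\<delta>>0. \<forall>x. \<bar>x\<bar> < ereal \<delta> \<longrightarrow> h i x = 0" using h_CK by (simp add: CK_def)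
    then obtain d where d: "\<And>i. 0 < d i" "\<And>i x. \<bar>x\<bar> < ereal (d i) \<Longrightarrow> h i x = 0" by metis
    define \<delta> where "\<delta> = Min (insert 1 (d ` {..<N}))"
    have \<delta>pos: "0 < \<delta>" unfolding \<delta>_def using d(1) by (subst Min_gr_iff) auto
    have \<delta>le: "\<delta> \<le> d i" if "i < N" for i unfolding \<delta>_def using that by (intro Min_le) auto
    have vague': "convergent (\<lambda>n. \<mu> ^ n * (\<integral>\<omega>. f (ereal (X [] \<omega> / b n)) \<partial>M))" if "CK f" for f
      using vague[OF that] by (auto simp: convergent_def)
    obtain C where C: "\<And>n. \<mu> ^ n * measure M {\<omega> \<in> space M. \<delta> * b n \<le> \<bar>X [] \<omega>\<bar>} \<le> C"
      using pX_bound[where X="X []", OF P X_meas b_pos mupos vague' \<delta>pos] by blast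
    have sumaj: "(\<integral>\<^sup>+j. ennreal (aj M xi j) \<partial>count_space UNIV) = ennreal \<mu>"
      using sum_aj[where xi=xi, OF P xi_meas Z_int] by (simp add: mu_def)
    define T where "T B = (\<integral>\<^sup>+j. ennreal (aj M xi j) * indicator {B<..} j \<partial>count_space UNIV)" for B :: nat
    have Tle: "T B \<le> ennreal \<mu>" for B
      unfolding T_def sumaj[symmetric] by (rule nn_integral_mono) (simp split: split_indicator)
    have Tfin: "T B \<noteq> \<infinity>" for B using Tle[of B] by (auto simp: top_unique)
    have Tlim: "T \<longlonglongrightarrow> 0"
      unfolding T_def by (rule tail_aj) (simp add: sumaj)
    define tB where "tB B = enn2real (T B)" for B
    have Teq: "T B = ennreal (tB B)" for B using Tfin[of B] by (simp add: tB_def ennreal_enn2real_if)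
    have tB0: "0 \<le> tB B" for B by (simp add: tB_def)
    have tBlim: "tB \<longlonglongrightarrow> 0"
      unfolding tB_def by (rule tendsto_enn2real) (use Tlim in simp_all)
    define cst where "cst = real K * real K * (C / \<mu>) / ps"
    have key: "Pstar M xi (Ev B n) \<le> cst * tB B" if Kn: "K \<le> n" for B n
    proof -
      let ?t = "\<delta> * b n"
      let ?pX = "measure M {\<omega> \<in> space M. ?t \<le> \<bar>X [] \<omega>\<bar>}"
      define U where "U = (\<Union>m\<in>{n-K..<n}. \<Union>k\<in>{n-K<..n}. \<Union>v\<in>{v. length v = n}.
            {\<omega> \<in> space M. B < v!m \<and> v \<in> gw_tree xi \<omega> \<and> ?t \<le> \<bar>X (take k v) \<omega>\<bar>})"
      have Um: "U \<in> sets M" unfolding U_def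
        by (intro sets.countable_UN'' Cs_sets[OF xi_meas X_meas]) (auto intro: countable_subset[OF subset_UNIV countableI_type])
      have sub: "Ev B n \<inter> S \<subseteq> U"
      proof
        fix \<omega> assume \<omega>: "\<omega> \<in> Ev B n \<inter> S"
        then have "\<omega> \<in> Ev B n" by blast
        then have sp: "\<omega> \<in> space M" and gt: "rho h (NK xi X b K n \<omega>) (NKB xi X b K B n \<omega>) > \<epsilon>"
          unfolding Ev_def by blast+
        show "\<omega> \<in> U"
        proof (rule ccontr)
          assume nU: "\<omega> \<notin> U"
          have "rho h (NK xi X b K n \<omega>) (NKB xi X b K B n \<omega>) \<le> (1/2) ^ N"
          proof (rule event_incl[OF Kn, where d=d and \<delta>=\<delta>])
            show "\<And>i x. i < N \<Longrightarrow> \<bar>x\<bar> < ereal (d i) \<Longrightarrow> h i x = 0" using d(2) by blast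
            show "\<And>i. i < N \<Longrightarrow> 0 < d i" using d(1) by blast
            show "\<And>i. i < N \<Longrightarrow> \<delta> \<le> d i" using \<delta>le by blast
            show "0 < b n" by (rule b_pos)
            fix v m k assume "length v = n" "n - K \<le> m" "m < n" "n - K < k" "k \<le> n" "B < v!m" "v \<in> gw_tree xi \<omega>"
            note hyps = this
            show "\<bar>X (take k v) \<omega>\<bar> < \<delta> * b n"
            proof (rule ccontr)
              assume "\<not> \<bar>X (take k v) \<omega>\<bar> < \<delta> * b n"
              then have le: "\<delta> * b n \<le> \<bar>X (take k v) \<omega>\<bar>" by (simp only: not_less)
              have "\<omega> \<in> {\<omega> \<in> space M. B < v!m \<and> v \<in> gw_tree xi \<omega> \<and> \<delta> * b n \<le> \<bar>X (take k v) \<omega>\<bar>}"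
                using hyps(6,7) sp le by blast
              note mem = this
              have "\<omega> \<in> U" unfolding U_def
                apply (rule UN_I[where a=m])
                 apply (simp only: atLeastLessThan_iff hyps(2,3) conj_absorb)
                apply (rule UN_I[where a=k])
                 apply (simp only: greaterThanAtMost_iff hyps(4,5) conj_absorb)
                apply (rule UN_I[where a=v])
                 apply (simp only: mem_Collect_eq hyps(1))
                by (rule mem)
              then show False using nU by blast
            qed
          qed
          then have "rho h (NK xi X b K n \<omega>) (NKB xi X b K B n \<omega>) < \<epsilon>" using N by (rule le_less_trans)
          then show False using less_not_sym gt by blast
        qed
      qed
      have "measure M (Ev B n \<inter> S) \<le> measure M U"
        by (rule finite_measure_mono[OF sub Um])
      also have "measure M U \<le> real K * real K * (\<mu> ^ (n - 1) * tB B * ?pX)"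
      proof -
        have "emeasure M U \<le> of_nat K * of_nat K * ((ennreal \<mu>) ^ (n - 1) * T B * ennreal ?pX)"
          unfolding U_def T_def
          by (rule union_bound[OF P xi_meas X_meas indep xi_id X_id sumaj Kn])
        also have "\<dots> = ennreal (real K * real K * (\<mu> ^ (n - 1) * tB B * ?pX))"
          using mupos tB0[of B]
          by (simp add: Teq ennreal_mult ennreal_power ennreal_of_nat_eq_real_of_nat)
        finally show ?thesis using tB0[of B] mupos by (simp add: emeasure_eq_measure)
      qed
      also have "\<dots> \<le> real K * real K * (C / \<mu> * tB B)"
      proof -
        have n1: "n = Suc (n - 1)" using Kn K_gt by simp
        have pw: "\<mu> ^ n = \<mu> * \<mu> ^ (n - 1)" using n1 by (metis power_Suc)
        have "\<mu> ^ (n - 1) * ?pX = (\<mu> ^ n * ?pX) / \<mu>"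
          unfolding pw using mupos by simp
        also have "\<dots> \<le> C / \<mu>" using mupos by (intro divide_right_mono C) simp
        finally have a: "\<mu> ^ (n - 1) * ?pX \<le> C / \<mu>" .
        have "\<mu> ^ (n - 1) * tB B * ?pX = (\<mu> ^ (n - 1) * ?pX) * tB B" by (simp only: mult_ac)
        also have "\<dots> \<le> C / \<mu> * tB B" by (rule mult_right_mono[OF a tB0])
        finally have "\<mu> ^ (n - 1) * tB B * ?pX \<le> C / \<mu> * tB B" .
        then show ?thesis by (rule mult_left_mono) simp
      qed
      finally have mle: "measure M (Ev B n \<inter> S) \<le> real K * real K * (C / \<mu> * tB B)" .
      have "Pstar M xi (Ev B n) = measure M (Ev B n \<inter> S) / ps" by (rule Pst)
      also have "\<dots> \<le> real K * real K * (C / \<mu> * tB B) / ps" by (rule divide_right_mono[OF mle ps0])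
      also have "real K * real K * (C / \<mu> * tB B) / ps = cst * tB B"
        unfolding cst_def by (simp add: divide_inverse mult_ac)
      finally show ?thesis .
    qed
    have up: "limsup (\<lambda>n. ereal (Pstar M xi (Ev B n))) \<le> ereal (cst * tB B)" for B
      by (rule Limsup_bounded) (use key in \<open>auto simp: eventually_sequentially\<close>)
    have lo: "0 \<le> limsup (\<lambda>n. ereal (Pstar M xi (Ev B n)))" for B
      by (rule le_Limsup) (auto simp: Pst ps0)
    have "((\<lambda>B. ereal (cst * tB B)) \<longlongrightarrow> ereal (cst * 0)) at_top"
      by (intro tendsto_intros tBlim)
    then have uplim: "((\<lambda>B. ereal (cst * tB B)) \<longlongrightarrow> 0) at_top" by (simp add: zero_ereal_def)
    show ?thesis
      by (rule tendsto_sandwich[OF _ _ tendsto_const uplim]) (use up lo in auto)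
  qed
  then show "((\<lambda>B. limsup (\<lambda>n. ereal (Pstar M xi
            {\<omega> \<in> space M. rho h (NK xi X b K n \<omega>) (NKB xi X b K B n \<omega>) > \<epsilon>})))
          \<longlongrightarrow> 0) at_top" unfolding Ev_def .
qed


end
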